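(* Let $\boldsymbol{\omega}\in\mathbb{R}^d$ satisfy $|\boldsymbol{\omega}\cdot\boldsymbol{\nu}|>\gamma_0|\boldsymbol{\nu}|^{-\tau}$ for all $\boldsymbol{\nu}\in\mathbb{Z}^d\setminus\{\boldsymbol{0}\}$, with $\gamma_0>0$, $\tau>d-1$. Let $\boldsymbol{\nu},\boldsymbol{\nu}'\in\mathbb{Z}^d$ with $\boldsymbol{\nu}\ne\boldsymbol{\nu}'$, and suppose $\delta_j(\boldsymbol{\omega}\cdot\boldsymbol{\nu})=\delta_{j'}(\boldsymbol{\omega}\cdot\boldsymbol{\nu}')$ for some $j,j'\in\{1,\ldots,d\}$. Then either $|\boldsymbol{\nu}-\boldsymbol{\nu}'|\ge|\boldsymbol{\nu}|+|\boldsymbol{\nu}'|-2$ or $|\boldsymbol{\nu}-\boldsymbol{\nu}'|=2$.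
   Context: $|\boldsymbol{\nu}|=|\nu_1|+\cdots+|\nu_d|$. For $j\in\{1,\ldots,d\}$ and $\boldsymbol{\nu}\in\mathbb{Z}^d$, $\delta_j(\boldsymbol{\omega}\cdot\boldsymbol{\nu}):=\min\{|\boldsymbol{\omega}\cdot\boldsymbol{\nu}-\omega_j|,|\boldsymbol{\omega}\cdot\boldsymbol{\nu}+\omega_j|\}=|\boldsymbol{\omega}\cdot(\boldsymbol{\nu}-\sigma(\boldsymbol{\nu},j)\boldsymbol{e}_j)|$, where $\sigma(\boldsymbol{\nu},j)\in\{\pm1\}$ is a minimizer and $\boldsymbol{e}_j$ the $j$-th standard basis vector. *)

theory Defs
  imports "HOL-Analysis.Analysis"
begin

text \<open>Integer vectors in Z^d are rendered as int ^ 'd, real vectors as real ^ 'd,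
  with the dimension d = CARD('d).\<close>

definition l1norm :: "int ^ 'd::finite \<Rightarrow> int" where
  "l1norm \<nu> = (\<Sum>i\<in>UNIV. \<bar>\<nu> $ i\<bar>)"

definition idot :: "real ^ 'd::finite \<Rightarrow> int ^ 'd \<Rightarrow> real" where
  "idot \<omega> \<nu> = (\<Sum>i\<in>UNIV. \<omega> $ i * real_of_int (\<nu> $ i))"

definition delta :: "real ^ 'd::finite \<Rightarrow> 'd \<Rightarrow> real \<Rightarrow> real" where
  "delta \<omega> j x = min \<bar>x - \<omega> $ j\<bar> \<bar>x + \<omega> $ j\<bar>"

end

theory Submission
  imports Defs
begin

lemma idot_diff: "idot \<omega> (a - b) = idot \<omega> a - idot \<omega> b"
  unfolding idot_def by (simp add: algebra_simps sum_subtractf)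
lemma idot_add: "idot \<omega> (a + b) = idot \<omega> a + idot \<omega> b"
  unfolding idot_def by (simp add: algebra_simps sum.distrib)
lemma idot_scale: "idot \<omega> (c *s a) = of_int c * idot \<omega> a"
  unfolding idot_def by (simp add: algebra_simps sum_distrib_left)
lemma idot_ind: "idot \<omega> (\<chi> i. if i = k then 1 else 0) = \<omega> $ k"
  unfolding idot_def by (simp add: if_distrib sum.delta cong: if_cong)

lemma idot_zero_imp:
  fixes \<omega> :: "real ^ 'd::finite"
  assumes g: "\<gamma>\<^sub>0 > 0"
    and D: "\<forall>\<mu> :: int ^ 'd. \<mu> \<noteq> 0 \<longrightarrow>
           \<bar>idot \<omega> \<mu>\<bar> > \<gamma>\<^sub>0 * real_of_int (l1norm \<mu>) powr (- \<tau>)"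
    and z: "idot \<omega> \<mu> = 0"
  shows "\<mu> = 0"
proof (rule ccontr)
  assume "\<mu> \<noteq> 0"
  with D have "\<bar>idot \<omega> \<mu>\<bar> > \<gamma>\<^sub>0 * real_of_int (l1norm \<mu>) powr (- \<tau>)" by blast
  moreover have "\<gamma>\<^sub>0 * real_of_int (l1norm \<mu>) powr (- \<tau>) \<ge> 0" using g by simp
  ultimately show False using z by simp
qed

lemma abs_eq_cases: "\<bar>u::real\<bar> = \<bar>v\<bar> \<Longrightarrow> \<exists>t::int. (t = 1 \<or> t = -1) \<and> u = of_int t * v"
proof -
  assume h: "\<bar>u\<bar> = \<bar>v\<bar>"
  show ?thesis
  proof (cases "u = v")
    case True thus ?thesis by (intro exI[of _ 1]) simp
  next
    case False hence "u = - v" using h by (auto simp: abs_eq_iff)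
    thus ?thesis by (intro exI[of _ "-1"]) simp
  qed
qed

lemma min_abs_cases:
  fixes x a y b :: real
  assumes "min \<bar>x - a\<bar> \<bar>x + a\<bar> = min \<bar>y - b\<bar> \<bar>y + b\<bar>"
  shows "\<exists>s s' :: int. (s = 1 \<or> s = -1) \<and> (s' = 1 \<or> s' = -1) \<and> \<bar>x + of_int s * a\<bar> = \<bar>y + of_int s' * b\<bar>"
proof -
  have "\<exists>s::int. (s = 1 \<or> s = -1) \<and> min \<bar>x - a\<bar> \<bar>x + a\<bar> = \<bar>x + of_int s * a\<bar>"
  proof (cases "\<bar>x - a\<bar> \<le> \<bar>x + a\<bar>")
    case True thus ?thesis by (intro exI[of _ "-1"]) (simp add: min_def)
  next
    case False thus ?thesis by (intro exI[of _ 1]) (simp add: min_def)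
  qed
  moreover have "\<exists>s::int. (s = 1 \<or> s = -1) \<and> min \<bar>y - b\<bar> \<bar>y + b\<bar> = \<bar>y + of_int s * b\<bar>"
  proof (cases "\<bar>y - b\<bar> \<le> \<bar>y + b\<bar>")
    case True thus ?thesis by (intro exI[of _ "-1"]) (simp add: min_def)
  next
    case False thus ?thesis by (intro exI[of _ 1]) (simp add: min_def)
  qed
  ultimately show ?thesis using assms by metis
qed

lemma l1_diff_bound:
  fixes \<nu> \<nu>' :: "int ^ 'd::finite"
  shows "l1norm (\<nu> - \<nu>') \<ge> l1norm \<nu> + l1norm \<nu>' - l1norm (\<nu> + \<nu>')"
proof -
  have "\<And>i. \<bar>(\<nu> - \<nu>') $ i\<bar> \<ge> \<bar>\<nu> $ i\<bar> + \<bar>\<nu>' $ i\<bar> - \<bar>(\<nu> + \<nu>') $ i\<bar>"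
    by auto
  hence "(\<Sum>i\<in>UNIV. \<bar>\<nu> $ i\<bar> + \<bar>\<nu>' $ i\<bar> - \<bar>(\<nu> + \<nu>') $ i\<bar>) \<le> (\<Sum>i\<in>UNIV. \<bar>(\<nu> - \<nu>') $ i\<bar>)"
    by (rule sum_mono)
  thus ?thesis by (simp add: l1norm_def sum_subtractf sum.distrib)
qed

theorem lemma3p1:
  fixes \<omega> :: "real ^ 'd::finite"
    and \<gamma>\<^sub>0 \<tau> :: real
    and \<nu> \<nu>' :: "int ^ 'd"
    and j j' :: 'd
  assumes "\<gamma>\<^sub>0 > 0"
    and "\<tau> > real CARD('d) - 1"
    and "\<forall>\<mu> :: int ^ 'd. \<mu> \<noteq> 0 \<longrightarrow>
           \<bar>idot \<omega> \<mu>\<bar> > \<gamma>\<^sub>0 * real_of_int (l1norm \<mu>) powr (- \<tau>)"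
    and "\<nu> \<noteq> \<nu>'"
    and "delta \<omega> j (idot \<omega> \<nu>) = delta \<omega> j' (idot \<omega> \<nu>')"
  shows "l1norm (\<nu> - \<nu>') \<ge> l1norm \<nu> + l1norm \<nu>' - 2 \<or> l1norm (\<nu> - \<nu>') = 2"
proof -
  obtain s s' :: int where s: "s = 1 \<or> s = -1" and s': "s' = 1 \<or> s' = -1"
    and e1: "\<bar>idot \<omega> \<nu> + of_int s * \<omega> $ j\<bar> = \<bar>idot \<omega> \<nu>' + of_int s' * \<omega> $ j'\<bar>"
    using min_abs_cases[OF assms(5)[unfolded delta_def]] by blast
  obtain t :: int where t: "t = 1 \<or> t = -1"
    and e2: "idot \<omega> \<nu> + of_int s * \<omega> $ j = of_int t * (idot \<omega> \<nu>' + of_int s' * \<omega> $ j')"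
    using abs_eq_cases[OF e1] by blast
  define w :: "int ^ 'd" where "w = (\<chi> i. t * s' * (if i = j' then 1 else 0) - s * (if i = j then 1 else 0))"
  define \<mu> where "\<mu> = \<nu> - t *s \<nu>' - w"
  have "idot \<omega> \<mu> = idot \<omega> \<nu> - of_int t * idot \<omega> \<nu>' - of_int t * of_int s' * \<omega> $ j' + of_int s * \<omega> $ j"
  proof -
    have wq: "w = (t * s') *s (\<chi> i. if i = j' then 1 else 0) - s *s (\<chi> i. if i = j then (1::int) else 0)"
      unfolding w_def by (simp add: vec_eq_iff)
    show ?thesis unfolding \<mu>_def wq idot_diff idot_scale idot_ind by (simp add: algebra_simps)
  qed
  hence "idot \<omega> \<mu> = 0" using e2 by (simp add: algebra_simps)
  hence "\<mu> = 0" using idot_zero_imp[OF assms(1) assms(3)] by blast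
  hence nu: "\<nu> = t *s \<nu>' + w" unfolding \<mu>_def by (simp add: algebra_simps)
  have wle: "l1norm w \<le> 2"
  proof -
    have "\<And>i. \<bar>w $ i\<bar> \<le> (if i = j' then 1 else 0) + (if i = j then 1 else 0)"
      unfolding w_def using s s' t by auto
    hence "l1norm w \<le> (\<Sum>i\<in>UNIV. (if i = j' then 1 else 0) + (if i = j then (1::int) else 0))"
      unfolding l1norm_def by (rule sum_mono)
    thus ?thesis by (simp add: sum.distrib)
  qed
  show ?thesis using t
  proof
    assume "t = 1"
    hence d: "\<nu> - \<nu>' = w" using nu by simp
    have "l1norm w = 2"
    proof (cases "j = j'")
      case True
      have "l1norm w = \<bar>s' - s\<bar>"
        unfolding l1norm_def w_def using \<open>t = 1\<close> True
        by (simp add: if_distrib sum.delta cong: if_cong)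
      moreover have "w \<noteq> 0" using d assms(4) by auto
      hence "s' \<noteq> s" unfolding w_def using True \<open>t = 1\<close> by (auto simp: vec_eq_iff)
      ultimately show ?thesis using s s' by auto
    next
      case False
      have "l1norm w = (\<Sum>i\<in>UNIV. (if i = j' then 1 else 0) + (if i = j then (1::int) else 0))"
        unfolding l1norm_def w_def using \<open>t = 1\<close> False s s'
        by (intro sum.cong) auto
      thus ?thesis by (simp add: sum.distrib)
    qed
    thus ?thesis using d by simp
  next
    assume "t = -1"
    hence "\<nu> + \<nu>' = w" using nu by (simp add: vec_eq_iff)
    thus ?thesis using l1_diff_bound[of \<nu> \<nu>'] wle by simp
  qed
qed

end
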